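(* Let $N \ge \Delta \geq 2$ be integers. There exists a connected graph $G$ with $e(G)=N$, $\Delta(G)=\Delta$ and $e(L(G)) = f(N,\Delta)$; furthermore $n(G) \leq N+1$.
   Context: All graphs are finite and simple; $L(G)$ is the line graph of $G$; $n(\cdot)$, $e(\cdot)$, $\Delta(\cdot)$, $\delta(\cdot)$ denote number of vertices, number of edges, maximum degree and minimum degree. For integers $N \ge \Delta \ge 1$, $f(N,\Delta) = \max\{ e(L(G)) : e(G)=N, \Delta(G)=\Delta, \delta(G)\geq 1\}$, the maximum over all simple graphs $G$. *)

theory Defs
  imports Main
begin

definition simple_graph :: "nat set \<Rightarrow> nat set set \<Rightarrow> bool" where
  "simple_graph V E \<longleftrightarrow> finite V \<and> (\<forall>e\<in>E. e \<subseteq> V \<and> card e = 2)"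

definition num_vertices :: "nat set \<Rightarrow> nat set set \<Rightarrow> nat" where
  "num_vertices V E = card V"

definition num_edges :: "nat set \<Rightarrow> nat set set \<Rightarrow> nat" where
  "num_edges V E = card E"

definition degree :: "nat set set \<Rightarrow> nat \<Rightarrow> nat" where
  "degree E v = card {e \<in> E. v \<in> e}"

definition max_degree :: "nat set \<Rightarrow> nat set set \<Rightarrow> nat" where
  "max_degree V E = Max (degree E ` V)"

definition min_degree :: "nat set \<Rightarrow> nat set set \<Rightarrow> nat" where
  "min_degree V E = Min (degree E ` V)"

definition line_graph_edges :: "nat set set \<Rightarrow> nat set set set" where
  "line_graph_edges E = {{e1, e2} | e1 e2. e1 \<in> E \<and> e2 \<in> E \<and> e1 \<noteq> e2 \<and> e1 \<inter> e2 \<noteq> {}}"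

definition line_graph :: "nat set \<Rightarrow> nat set set \<Rightarrow> nat set set \<times> nat set set set" where
  "line_graph V E = (E, line_graph_edges E)"

definition connected_graph :: "nat set \<Rightarrow> nat set set \<Rightarrow> bool" where
  "connected_graph V E \<longleftrightarrow> V \<noteq> {} \<and>
     (\<forall>u\<in>V. \<forall>v\<in>V. (\<lambda>x y. {x, y} \<in> E)\<^sup>*\<^sup>* u v)"

definition f_max :: "nat \<Rightarrow> nat \<Rightarrow> nat" where
  "f_max N D = Max {card (snd (line_graph V E)) | V E.
      simple_graph V E \<and> num_edges V E = N \<and> max_degree V E = D \<and> min_degree V E \<ge> 1}"

end

theory Submission
  imports Defs
begin


abbreviation reach :: "nat set set \<Rightarrow> nat \<Rightarrow> nat \<Rightarrow> bool" where
  "reach E \<equiv> (\<lambda>x y. {x, y} \<in> E)\<^sup>*\<^sup>*"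

lemma reach_sym: "reach E x y \<Longrightarrow> reach E y x"
proof (induction rule: rtranclp_induct)
  case base then show ?case by simp
next
  case (step y z)
  have "{z, y} \<in> E" using step(2) by (simp add: insert_commute)
  then show ?case using step(3) by (meson converse_rtranclp_into_rtranclp)
qed

lemma reach_trans: "reach E x y \<Longrightarrow> reach E y z \<Longrightarrow> reach E x z"
  by (rule rtranclp_trans)

lemma reach_edge: "{x, y} \<in> E \<Longrightarrow> reach E x y"
  by auto

lemma reach_mono_gen:
  assumes "\<And>x y. {x, y} \<in> E \<Longrightarrow> reach F x y" and "reach E a b"
  shows "reach F a b"
  using assms(2)
proof (induction rule: rtranclp_induct)
  case base then show ?case by simp
next
  case (step y z) then show ?case using assms(1) reach_trans by blast
qed

lemma reach_mono: "E \<subseteq> F \<Longrightarrow> reach E a b \<Longrightarrow> reach F a b"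
  by (rule reach_mono_gen[of E F]) auto

lemma reach_in_V:
  assumes "simple_graph V E" "a \<in> V" "reach E a b" shows "b \<in> V"
  using assms(3)
proof (induction rule: rtranclp_induct)
  case base then show ?case using assms by simp
next
  case (step y z) then show ?case using assms(1) unfolding simple_graph_def by blast
qed

lemma reach_avoid:
  assumes "reach F x y" and "\<And>z. reach F x z \<Longrightarrow> z \<notin> e0"
  shows "reach (F - {e0}) x y"
  using assms(1)
proof (induction rule: rtranclp_induct)
  case base then show ?case by simp
next
  case (step y z)
  have "y \<notin> e0" using assms(2) step(1) by blast
  then have "{y, z} \<noteq> e0" by blast
  then have "{y, z} \<in> F - {e0}" using step(2) by blast
  then show ?case using step(3) by (meson rtranclp.rtrancl_into_rtrancl)
qed

lemma edge_card2:
  assumes "simple_graph V E" "{x, y} \<in> E" shows "x \<noteq> y" "x \<in> V" "y \<in> V"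
  using assms unfolding simple_graph_def by (auto simp: card_insert_if split: if_splits)

lemma simple_finite_E: "simple_graph V E \<Longrightarrow> finite E"
  unfolding simple_graph_def by (meson Pow_iff finite_Pow_iff rev_finite_subset subsetI)

lemma edge_form:
  assumes "simple_graph V E" "e \<in> E" "v \<in> e" shows "\<exists>w. e = {v, w} \<and> w \<noteq> v"
proof -
  have "card e = 2" using assms unfolding simple_graph_def by auto
  then obtain x y where "e = {x, y}" "x \<noteq> y" by (auto simp: card_2_iff)
  then show ?thesis using assms(3) by (auto simp: insert_commute)
qed

lemma degree_pos_nbr:
  assumes "simple_graph V E" "degree E v \<ge> 1" shows "\<exists>w. {v, w} \<in> E \<and> w \<noteq> v"
proof -
  have "{e \<in> E. v \<in> e} \<noteq> {}" using assms(2) unfolding degree_def by (metis card.empty not_one_le_zero)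
  then obtain e where "e \<in> E" "v \<in> e" by blast
  then show ?thesis using edge_form[OF assms(1)] by blast
qed

lemma choose2_super: "(a choose 2) + (b choose 2) \<le> ((a + b) choose 2)"
proof (induction b)
  case 0 then show ?case by simp
next
  case (Suc b)
  have e1: "(Suc b choose 2) = b + (b choose 2)"
    by (metis Suc_1 binomial_Suc_Suc choose_one)
  have e2: "((a + Suc b) choose 2) = (a + b) + ((a + b) choose 2)"
    by (metis Suc_1 add_Suc_right binomial_Suc_Suc choose_one)
  show ?case using Suc e1 e2 by linarith
qed

lemma card_sum_if: "finite A \<Longrightarrow> card {x \<in> A. P x} = (\<Sum>x\<in>A. if P x then 1 else 0::nat)"
proof (induction A rule: finite_induct)
  case empty then show ?case by simp
next
  case (insert a A)
  have "{x \<in> insert a A. P x} = (if P a then insert a {x \<in> A. P x} else {x \<in> A. P x})" by auto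
  then show ?case using insert by simp
qed

lemma line_graph_formula:
  assumes G: "simple_graph V E"
  shows "card (line_graph_edges E) = (\<Sum>v\<in>V. degree E v choose 2)"
proof -
  let ?P = "line_graph_edges E"
  have finE: "finite E" using simple_finite_E[OF G] .
  have finV: "finite V" using G unfolding simple_graph_def by auto
  have PPow: "?P \<subseteq> Pow E" unfolding line_graph_edges_def by auto
  have finP: "finite ?P" using PPow finE by (meson finite_Pow_iff rev_finite_subset)
  have one: "card {v \<in> V. v \<in> \<Inter>p} = 1" if "p \<in> ?P" for p
  proof -
    have "\<exists>e1 e2. p = {e1, e2} \<and> e1 \<in> E \<and> e2 \<in> E \<and> e1 \<noteq> e2 \<and> e1 \<inter> e2 \<noteq> {}"
      using that unfolding line_graph_edges_def by simp
    then obtain e1 e2 where p: "p = {e1, e2}" "e1 \<in> E" "e2 \<in> E" "e1 \<noteq> e2" "e1 \<inter> e2 \<noteq> {}"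
      by blast
    obtain x where x: "x \<in> e1" "x \<in> e2" using p(5) by blast
    obtain y1 where y1: "e1 = {x, y1}" "y1 \<noteq> x" using edge_form[OF G p(2) x(1)] by blast
    obtain y2 where y2: "e2 = {x, y2}" "y2 \<noteq> x" using edge_form[OF G p(3) x(2)] by blast
    have "y1 \<noteq> y2" using p(4) y1 y2 by auto
    have xV: "x \<in> V" using G p(2) x(1) unfolding simple_graph_def by auto
    have "{v \<in> V. v \<in> \<Inter>p} = {x}" using p(1) y1 y2 \<open>y1 \<noteq> y2\<close> xV by auto
    then show ?thesis by simp
  qed
  have sets: "{p \<in> ?P. v \<in> \<Inter>p} = {S. S \<subseteq> {e \<in> E. v \<in> e} \<and> card S = 2}" for v
  proof
    show "{p \<in> ?P. v \<in> \<Inter>p} \<subseteq> {S. S \<subseteq> {e \<in> E. v \<in> e} \<and> card S = 2}"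
    proof
      fix p assume "p \<in> {p \<in> ?P. v \<in> \<Inter>p}"
      then have pP: "p \<in> ?P" and vp: "v \<in> \<Inter>p" by auto
      have "\<exists>e1 e2. p = {e1, e2} \<and> e1 \<in> E \<and> e2 \<in> E \<and> e1 \<noteq> e2"
        using pP unfolding line_graph_edges_def by auto
      then obtain e1 e2 where "p = {e1, e2}" "e1 \<in> E" "e2 \<in> E" "e1 \<noteq> e2" by blast
      then show "p \<in> {S. S \<subseteq> {e \<in> E. v \<in> e} \<and> card S = 2}" using vp by auto
    qed
    show "{S. S \<subseteq> {e \<in> E. v \<in> e} \<and> card S = 2} \<subseteq> {p \<in> ?P. v \<in> \<Inter>p}"
    proof
      fix S assume "S \<in> {S. S \<subseteq> {e \<in> E. v \<in> e} \<and> card S = 2}"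
      then have S: "S \<subseteq> {e \<in> E. v \<in> e}" "card S = 2" by auto
      then obtain e1 e2 where "S = {e1, e2}" "e1 \<noteq> e2" by (auto simp: card_2_iff)
      moreover have "e1 \<in> E" "e2 \<in> E" "v \<in> e1" "v \<in> e2" using S calculation by auto
      ultimately have "S \<in> ?P" unfolding line_graph_edges_def by blast
      then show "S \<in> {p \<in> ?P. v \<in> \<Inter>p}" using S by auto
    qed
  qed
  have "card ?P = (\<Sum>p\<in>?P. card {v \<in> V. v \<in> \<Inter>p})" using one by simp
  also have "\<dots> = (\<Sum>p\<in>?P. \<Sum>v\<in>V. if v \<in> \<Inter>p then 1 else 0)"
    using finV by (simp add: card_sum_if)
  also have "\<dots> = (\<Sum>v\<in>V. \<Sum>p\<in>?P. if v \<in> \<Inter>p then 1 else 0)" by (rule sum.swap)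
  also have "\<dots> = (\<Sum>v\<in>V. card {p \<in> ?P. v \<in> \<Inter>p})"
    using finP by (simp add: card_sum_if)
  also have "\<dots> = (\<Sum>v\<in>V. degree E v choose 2)"
    unfolding sets degree_def using finE by (simp add: n_subsets)
  finally show ?thesis .
qed



lemma deg2_next:
  assumes G: "simple_graph V E" and d: "degree E x \<ge> 2"
  shows "\<exists>z. {x, z} \<in> E \<and> z \<noteq> y"
proof -
  have "card {e \<in> E. x \<in> e} \<ge> 2" using d unfolding degree_def .
  then obtain e1 where e1: "e1 \<in> {e \<in> E. x \<in> e}"
    by (metis card.empty ex_in_conv not_numeral_le_zero)
  have "card ({e \<in> E. x \<in> e} - {e1}) \<ge> 1"
    using \<open>card {e \<in> E. x \<in> e} \<ge> 2\<close> e1 by (simp add: card_Diff_singleton_if)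
  then obtain e2 where "e2 \<in> {e \<in> E. x \<in> e} - {e1}"
    by (metis card.empty ex_in_conv not_one_le_zero)
  then have e: "e1 \<in> {e \<in> E. x \<in> e}" "e2 \<in> {e \<in> E. x \<in> e}" "e1 \<noteq> e2" using e1 by auto
  obtain z1 where z1: "e1 = {x, z1}" using edge_form[OF G] e(1) by blast
  obtain z2 where z2: "e2 = {x, z2}" using edge_form[OF G] e(2) by blast
  have "z1 \<noteq> z2" using e(3) z1 z2 by auto
  then show ?thesis using e z1 z2 by auto
qed

lemma cycle_exists:
  assumes G: "simple_graph V E" and aV: "a \<in> V"
    and deg: "\<And>x. reach E a x \<Longrightarrow> degree E x \<ge> 2"
  shows "\<exists>p q. {p, q} \<in> E \<and> reach E a p \<and> reach (E - {{p, q}}) q p"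
proof -
  define nxt where "nxt = (\<lambda>(y::nat, x::nat). (x, SOME z. {x, z} \<in> E \<and> z \<noteq> y))"
  define s where "s n = (nxt ^^ n) (a, a)" for n
  define w where "w n = snd (s n)" for n
  have sS: "s (Suc n) = nxt (s n)" for n unfolding s_def by simp
  have fst_s: "fst (s (Suc n)) = w n" for n unfolding sS w_def nxt_def by (simp add: case_prod_beta)
  have w0: "w 0 = a" unfolding w_def s_def by simp
  have wS: "w (Suc n) = (SOME z. {w n, z} \<in> E \<and> z \<noteq> fst (s n))" for n
    unfolding w_def sS nxt_def by (simp add: case_prod_beta)
  have inv: "reach E a (w n) \<and> {w n, w (Suc n)} \<in> E \<and> w (Suc n) \<noteq> fst (s n)" for n
  proof (induction n)
    case 0
    have "\<exists>z. {w 0, z} \<in> E \<and> z \<noteq> fst (s 0)" using deg2_next[OF G deg] w0 by simp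
    then have "{w 0, w (Suc 0)} \<in> E \<and> w (Suc 0) \<noteq> fst (s 0)" unfolding wS by (rule someI_ex)
    then show ?case using w0 by simp
  next
    case (Suc n)
    have r: "reach E a (w (Suc n))" using Suc reach_trans reach_edge by metis
    have "\<exists>z. {w (Suc n), z} \<in> E \<and> z \<noteq> fst (s (Suc n))" using deg2_next[OF G deg[OF r]] by simp
    then have "{w (Suc n), w (Suc (Suc n))} \<in> E \<and> w (Suc (Suc n)) \<noteq> fst (s (Suc n))"
      unfolding wS[of "Suc n"] by (rule someI_ex)
    then show ?case using r by simp
  qed
  have wE: "{w n, w (Suc n)} \<in> E" for n using inv by blast
  have wr: "reach E a (w n)" for n using inv by blast
  have nb: "w (Suc (Suc n)) \<noteq> w n" for n using inv[of "Suc n"] fst_s by simp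
  have wV: "w n \<in> V" for n using reach_in_V[OF G aV wr] .
  have "\<not> inj w"
  proof
    assume "inj w"
    have "finite (range w)" using G wV unfolding simple_graph_def by (meson finite_subset image_subset_iff)
    then have "finite (UNIV :: nat set)" using \<open>inj w\<close> finite_imageD by blast
    then show False by simp
  qed
  then have exr: "\<exists>j. \<exists>i<j. w i = w j" unfolding inj_def by (metis linorder_neqE_nat)
  define J where "J = (LEAST j. \<exists>i<j. w i = w j)"
  obtain I where I: "I < J" "w I = w J" using LeastI_ex[OF exr] unfolding J_def by blast
  have minim: "w k \<noteq> w l" if "k < l" "l < J" for k l
    using not_less_Least[of l "\<lambda>j. \<exists>i<j. w i = w j"] that unfolding J_def by blast
  have "J \<noteq> Suc I"
  proof
    assume "J = Suc I"
    then have "{w I, w I} \<in> E" using wE[of I] I by simp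
    then show False using edge_card2[OF G] by blast
  qed
  moreover have "J \<noteq> Suc (Suc I)" using nb[of I] I by auto
  ultimately have J3: "J \<ge> I + 3" using I by linarith
  define p where "p = w (J - 1)"
  define q where "q = w I"
  have pqE: "{p, q} \<in> E" using wE[of "J - 1"] J3 I unfolding p_def q_def
    by (metis Suc_diff_1 add_leD1 dual_order.strict_trans1 zero_less_Suc less_add_Suc1 numeral_3_eq_3 not_gr_zero)
  have avoid: "{w k, w (Suc k)} \<noteq> {p, q}" if "I \<le> k" "k < J - 1" for k
  proof
    assume eq: "{w k, w (Suc k)} = {p, q}"
    then have "(w k = p \<and> w (Suc k) = q) \<or> (w k = q \<and> w (Suc k) = p)" by (auto simp: doubleton_eq_iff)
    then show False
    proof
      assume h: "w k = p \<and> w (Suc k) = q"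
      then show False using minim[of k "J - 1"] that unfolding p_def by auto
    next
      assume h: "w k = q \<and> w (Suc k) = p"
      show False
      proof (cases "Suc k < J - 1")
        case True then show False using minim[of "Suc k" "J - 1"] h unfolding p_def by auto
      next
        case False
        then have k: "Suc k = J - 1" using that by linarith
        show False
        proof (cases "I < k")
          case True
          have "k < J" using that by linarith
          then show False using minim[of I k] h True unfolding q_def by auto
        next
          case False then show False using that k J3 by linarith
        qed
      qed
    qed
  qed
  have path: "reach (E - {{p, q}}) (w I) (w (I + m))" if "I + m \<le> J - 1" for m
    using that
  proof (induction m)
    case 0 then show ?case by simp
  next
    case (Suc m)
    have "{w (I + m), w (Suc (I + m))} \<in> E - {{p, q}}" using wE avoid[of "I + m"] Suc.prems by auto
    then show ?case using Suc by (simp add: rtranclp.rtrancl_into_rtrancl)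
  qed
  have "reach (E - {{p, q}}) q p" using path[of "J - 1 - I"] J3 unfolding p_def q_def by simp
  moreover have "reach E a p" unfolding p_def by (rule wr)
  ultimately show ?thesis using pqE by blast
qed



definition U :: "nat set \<Rightarrow> nat set set \<Rightarrow> (nat \<times> nat) set" where
  "U V E = {(x, y). x \<in> V \<and> y \<in> V \<and> \<not> reach E x y}"

lemma finite_U: "finite V \<Longrightarrow> finite (U V E)"
  unfolding U_def by (rule finite_subset[of _ "V \<times> V"]) auto

lemma deg_insert: "finite A \<Longrightarrow> degree (insert e A) v = degree A v + (if v \<in> e \<and> e \<notin> A then 1 else 0)"
proof -
  assume fA: "finite A"
  show ?thesis
  proof (cases "v \<in> e \<and> e \<notin> A")
    case True
    then have "{x \<in> insert e A. v \<in> x} = insert e {x \<in> A. v \<in> x}" by auto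
    then show ?thesis using True fA unfolding degree_def by simp
  next
    case False
    then have "{x \<in> insert e A. v \<in> x} = {x \<in> A. v \<in> x}" by auto
    then show ?thesis using False unfolding degree_def by simp
  qed
qed

lemma deg_remove: "finite A \<Longrightarrow> degree (A - {e}) v = degree A v - (if v \<in> e \<and> e \<in> A then 1 else 0)"
proof -
  assume fA: "finite A"
  have "{x \<in> A - {e}. v \<in> x} = {x \<in> A. v \<in> x} - {e}" by auto
  then show ?thesis using fA unfolding degree_def by (auto simp: card_Diff_singleton_if)
qed

lemma deg_pos: "finite A \<Longrightarrow> e \<in> A \<Longrightarrow> v \<in> e \<Longrightarrow> degree A v \<ge> 1"
proof -
  assume a: "finite A" "e \<in> A" "v \<in> e"
  then have "{x \<in> A. v \<in> x} \<noteq> {}" "finite {x \<in> A. v \<in> x}" by auto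
  then show ?thesis unfolding degree_def by (simp add: Suc_leI card_gt_0_iff)
qed

lemma switch:
  assumes G: "simple_graph V E" and pq: "{p, q} \<in> E" and cd: "{c, d} \<in> E"
    and cyc: "reach (E - {{p, q}}) q p" and nr: "\<not> reach E p c"
  defines "E' \<equiv> insert {p, c} (insert {q, d} (E - {{p, q}} - {{c, d}}))"
  shows "simple_graph V E' \<and> card E' = card E \<and> (\<forall>v. degree E' v = degree E v) \<and> U V E' \<subset> U V E"
proof -
  have finE: "finite E" using simple_finite_E[OF G] .
  have finV: "finite V" using G unfolding simple_graph_def by auto
  have pq2: "p \<noteq> q" "p \<in> V" "q \<in> V" using edge_card2[OF G pq] by auto
  have cd2: "c \<noteq> d" "c \<in> V" "d \<in> V" using edge_card2[OF G cd] by auto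
  have rqp: "reach E q p" using reach_mono[OF _ cyc] by blast
  have rpq: "reach E p q" using reach_sym[OF rqp] .
  have rdc: "reach E d c" using reach_sym[OF reach_edge[OF cd]] .
  have npd: "\<not> reach E p d" using nr rdc reach_trans by blast
  have nqc: "\<not> reach E q c" using nr rpq reach_trans by blast
  have nqd: "\<not> reach E q d" using npd rpq reach_trans by blast
  have ne: "p \<noteq> c" "p \<noteq> d" "q \<noteq> c" "q \<noteq> d" using nr npd nqc nqd by auto
  have pcE: "{p, c} \<notin> E" using nr reach_edge by blast
  have qdE: "{q, d} \<notin> E" using nqd reach_edge by blast
  have pqcd: "{p, q} \<noteq> {c, d}" using ne by (auto simp: doubleton_eq_iff)
  have pcqd: "{p, c} \<noteq> {q, d}" using ne pq2 by (auto simp: doubleton_eq_iff)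
  let ?E2 = "E - {{p, q}} - {{c, d}}"
  have fin2: "finite ?E2" using finE by simp
  have card2: "card ?E2 = card E - 2"
    using pq cd pqcd finE by (simp add: card_Diff_singleton_if)
  have cardE2: "card E \<ge> 2"
  proof -
    have "{{p, q}, {c, d}} \<subseteq> E" using pq cd by auto
    then have "card {{p, q}, {c, d}} \<le> card E" using finE card_mono by blast
    then show ?thesis using pqcd by simp
  qed
  have cardE': "card E' = card E"
    unfolding E'_def using fin2 card2 pcE qdE pcqd cardE2 by simp
  have sg: "simple_graph V E'"
    using G pq2 cd2 ne unfolding E'_def simple_graph_def by auto
  have deg: "degree E' v = degree E v" for v
  proof -
    have d1: "degree (E - {{p, q}}) v = degree E v - (if v \<in> {p, q} then 1 else 0)"
      using deg_remove[OF finE] pq by simp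
    have d2: "degree ?E2 v = degree (E - {{p, q}}) v - (if v \<in> {c, d} then 1 else 0)"
      using deg_remove[of "E - {{p, q}}"] finE cd pqcd by simp
    have d3: "degree (insert {q, d} ?E2) v = degree ?E2 v + (if v \<in> {q, d} then 1 else 0)"
      using deg_insert[OF fin2] qdE by simp
    have d4: "degree E' v = degree (insert {q, d} ?E2) v + (if v \<in> {p, c} then 1 else 0)"
      unfolding E'_def using deg_insert[of "insert {q, d} ?E2"] fin2 pcE pcqd by simp
    have dp: "degree E p \<ge> 1" "degree E q \<ge> 1" "degree E c \<ge> 1" "degree E d \<ge> 1"
      using deg_pos[OF finE pq] deg_pos[OF finE cd] by auto
    have dp2: "degree (E - {{p, q}}) c \<ge> 1" "degree (E - {{p, q}}) d \<ge> 1"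
      using deg_pos[of "E - {{p, q}}" "{c, d}"] finE cd pqcd by auto
    show ?thesis
    proof (cases "v = p \<or> v = q \<or> v = c \<or> v = d")
      case True
      then consider "v = p" | "v = q" | "v = c" | "v = d" by blast
      then show ?thesis
      proof cases
        case 1 then show ?thesis using d1 d2 d3 d4 dp ne pq2 cd2 by simp
      next
        case 2 then show ?thesis using d1 d2 d3 d4 dp ne pq2 cd2 by simp
      next
        case 3
        have "degree E' v = degree (E - {{p, q}}) c - 1 + 1" using 3 d2 d3 d4 ne pq2 cd2 by simp
        then show ?thesis using 3 d1 dp2 ne by simp
      next
        case 4
        have "degree E' v = degree (E - {{p, q}}) d - 1 + 1" using 4 d2 d3 d4 ne pq2 cd2 by simp
        then show ?thesis using 4 d1 dp2 ne by simp
      qed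
    next
      case False
      then show ?thesis using d1 d2 d3 d4 by auto
    qed
  qed
  have rE'qp: "reach E' q p"
  proof -
    have "reach (E - {{p, q}} - {{c, d}}) q p"
    proof (rule reach_avoid[OF cyc])
      fix z assume "reach (E - {{p, q}}) q z"
      then have "reach E q z" using reach_mono[of "E - {{p, q}}" E] by blast
      then have "reach E p z" using rpq reach_trans by blast
      then show "z \<notin> {c, d}" using nr npd by auto
    qed
    then show ?thesis using reach_mono[of ?E2 E'] unfolding E'_def by blast
  qed
  have rE'cd: "reach E' c d"
  proof -
    have "reach E' c p" using reach_sym[OF reach_edge[of p c E']] unfolding E'_def by simp
    moreover have "reach E' p q" using reach_sym[OF rE'qp] .
    moreover have "reach E' q d" using reach_edge[of q d E'] unfolding E'_def by simp
    ultimately show ?thesis using reach_trans by metis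
  qed
  have reachE: "reach E' x y" if "reach E x y" for x y
  proof (rule reach_mono_gen[OF _ that])
    fix a b assume ab: "{a, b} \<in> E"
    show "reach E' a b"
    proof (cases "{a, b} = {p, q} \<or> {a, b} = {c, d}")
      case True
      then show ?thesis using rE'qp rE'cd reach_sym by (auto simp: doubleton_eq_iff)
    next
      case False
      then have "{a, b} \<in> E'" using ab unfolding E'_def by auto
      then show ?thesis by (rule reach_edge)
    qed
  qed
  have sub: "U V E' \<subseteq> U V E" unfolding U_def using reachE by auto
  have "(p, c) \<in> U V E" unfolding U_def using nr pq2 cd2 by auto
  moreover have "(p, c) \<notin> U V E'" unfolding U_def using reach_edge[of p c E'] unfolding E'_def by auto
  ultimately have "U V E' \<subset> U V E" using sub by blast
  then show ?thesis using sg cardE' deg by blast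
qed



lemma reach_map:
  assumes "\<And>x y. {x, y} \<in> E \<Longrightarrow> {g x, g y} \<in> F" and "reach E a b"
  shows "reach F (g a) (g b)"
  using assms(2)
proof (induction rule: rtranclp_induct)
  case base then show ?case by simp
next
  case (step y z)
  then show ?case using assms(1) by (meson rtranclp.rtrancl_into_rtrancl)
qed

lemma identify:
  assumes G: "simple_graph V E" and uV: "u \<in> V" and vV: "v \<in> V" and nr: "\<not> reach E u v"
    and vw: "{v, w} \<in> E"
  defines "\<phi> \<equiv> (\<lambda>x. if x = v then u else x)"
  defines "E' \<equiv> (\<lambda>e. \<phi> ` e) ` E"
  shows "simple_graph (V - {v}) E' \<and> card E' = card E \<and> degree E' u = degree E u + degree E v
     \<and> (\<forall>x. x \<noteq> u \<longrightarrow> x \<noteq> v \<longrightarrow> degree E' x = degree E x) \<and> U (V - {v}) E' \<subset> U V E"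
proof -
  have finE: "finite E" using simple_finite_E[OF G] .
  have finV: "finite V" using G unfolding simple_graph_def by auto
  have uv: "u \<noteq> v" using nr by auto
  have noboth: "\<not> (u \<in> e \<and> v \<in> e)" if eE: "e \<in> E" for e
  proof
    assume h: "u \<in> e \<and> v \<in> e"
    obtain y where "e = {u, y}" using edge_form[OF G eE] h by blast
    then have "e = {u, v}" using h uv by auto
    then show False using nr reach_edge eE by metis
  qed
  have ecases: "\<exists>x y. e = {x, y} \<and> x \<noteq> y" if "e \<in> E" for e
    using G that unfolding simple_graph_def by (auto simp: card_2_iff)
  define \<psi> where "\<psi> f = (if f \<in> E then f else insert v (f - {u}))" for f
  have inv: "\<psi> (\<phi> ` e) = e" if e: "e \<in> E" for e
  proof (cases "v \<in> e")
    case False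
    then have "\<phi> ` e = e" unfolding \<phi>_def by (auto simp: image_iff)
    then show ?thesis using e unfolding \<psi>_def by simp
  next
    case True
    obtain y where y: "e = {v, y}" "y \<noteq> v" using edge_form[OF G e True] by blast
    have yu: "y \<noteq> u" using noboth[OF e] y by auto
    have im: "\<phi> ` e = {u, y}" using y unfolding \<phi>_def by auto
    have "{u, y} \<notin> E"
    proof
      assume "{u, y} \<in> E"
      then have "reach E u y" by (rule reach_edge)
      moreover have "reach E y v" using reach_sym[OF reach_edge] e y by metis
      ultimately show False using nr reach_trans by metis
    qed
    then show ?thesis unfolding \<psi>_def im using y yu uv by auto
  qed
  have inj: "inj_on (\<lambda>e. \<phi> ` e) E" by (rule inj_on_inverseI[of _ \<psi>]) (use inv in auto)
  have cardE': "card E' = card E" unfolding E'_def using card_image[OF inj] .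
  have sg: "simple_graph (V - {v}) E'"
  proof -
    have "\<phi> ` e \<subseteq> V - {v} \<and> card (\<phi> ` e) = 2" if e: "e \<in> E" for e
    proof -
      obtain x y where xy: "e = {x, y}" "x \<noteq> y" using ecases[OF e] by blast
      have "e \<subseteq> V" using G e unfolding simple_graph_def by auto
      then have sub: "\<phi> ` e \<subseteq> V - {v}" using uV uv unfolding \<phi>_def by auto
      have "\<phi> x \<noteq> \<phi> y" using xy noboth[OF e] unfolding \<phi>_def by auto
      then show ?thesis using sub xy by auto
    qed
    then show ?thesis using finV unfolding simple_graph_def E'_def by auto
  qed
  have degimg: "degree E' x = card {e \<in> E. x \<in> \<phi> ` e}" for x
  proof -
    have "{f \<in> E'. x \<in> f} = (\<lambda>e. \<phi> ` e) ` {e \<in> E. x \<in> \<phi> ` e}" unfolding E'_def by auto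
    moreover have "inj_on (\<lambda>e. \<phi> ` e) {e \<in> E. x \<in> \<phi> ` e}" using inj by (rule inj_on_subset) auto
    ultimately show ?thesis unfolding degree_def by (simp add: card_image)
  qed
  have degu: "degree E' u = degree E u + degree E v"
  proof -
    have pt: "(u \<in> \<phi> ` e) \<longleftrightarrow> (u \<in> e \<or> v \<in> e)" for e
      using uv unfolding \<phi>_def image_iff by metis
    have "{e \<in> E. u \<in> \<phi> ` e} = {e \<in> E. u \<in> e} \<union> {e \<in> E. v \<in> e}"
      using pt by blast
    moreover have "{e \<in> E. u \<in> e} \<inter> {e \<in> E. v \<in> e} = {}" using noboth by auto
    ultimately have "card {e \<in> E. u \<in> \<phi> ` e} = degree E u + degree E v"
      unfolding degree_def using finE by (simp add: card_Un_disjoint)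
    then show ?thesis using degimg by simp
  qed
  have dego: "degree E' x = degree E x" if "x \<noteq> u" "x \<noteq> v" for x
  proof -
    have "{e \<in> E. x \<in> \<phi> ` e} = {e \<in> E. x \<in> e}"
    proof -
      have "(x \<in> \<phi> ` e) \<longleftrightarrow> x \<in> e" for e
        using that unfolding \<phi>_def image_iff by metis
      then show ?thesis by blast
    qed
    then show ?thesis using degimg unfolding degree_def by simp
  qed
  have edgemap: "{\<phi> x, \<phi> y} \<in> E'" if "{x, y} \<in> E" for x y
    using that unfolding E'_def by (metis image_empty image_eqI image_insert)
  have wv: "w \<noteq> v" "w \<in> V" using edge_card2[OF G vw] by auto
  have nuw: "\<not> reach E u w"
  proof
    assume "reach E u w"
    moreover have "reach E w v" using reach_sym[OF reach_edge[OF vw]] .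
    ultimately show False using nr reach_trans by metis
  qed
  have sub: "U (V - {v}) E' \<subseteq> U V E"
  proof
    fix z assume "z \<in> U (V - {v}) E'"
    then obtain x y where z: "z = (x, y)" "x \<in> V" "y \<in> V" "x \<noteq> v" "y \<noteq> v" "\<not> reach E' x y"
      unfolding U_def by auto
    have "\<not> reach E x y"
    proof
      assume "reach E x y"
      then have "reach E' (\<phi> x) (\<phi> y)" using reach_map[of E \<phi> E'] edgemap by blast
      then show False using z unfolding \<phi>_def by simp
    qed
    then show "z \<in> U V E" using z unfolding U_def by auto
  qed
  have "(u, w) \<in> U V E" using nuw uV wv unfolding U_def by auto
  moreover have "(u, w) \<notin> U (V - {v}) E'"
  proof -
    have "{\<phi> v, \<phi> w} \<in> E'" using edgemap[OF vw] .
    then have "{u, w} \<in> E'" using wv unfolding \<phi>_def by simp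
    then show ?thesis unfolding U_def by auto
  qed
  ultimately have "U (V - {v}) E' \<subset> U V E" using sub by blast
  then show ?thesis using sg cardE' degu dego by blast
qed



definition good :: "nat set \<Rightarrow> nat set set \<Rightarrow> nat \<Rightarrow> bool" where
  "good V E D \<longleftrightarrow> simple_graph V E \<and> (\<forall>x\<in>V. 1 \<le> degree E x \<and> degree E x \<le> D) \<and> (\<exists>x\<in>V. degree E x = D)"

definition sigma :: "nat set \<Rightarrow> nat set set \<Rightarrow> nat" where
  "sigma V E = (\<Sum>x\<in>V. degree E x choose 2)"

lemma switch_step:
  assumes g: "good V E D" and aV: "a \<in> V" and cV: "c \<in> V" and nac: "\<not> reach E a c"
    and deg2: "\<And>x. reach E a x \<Longrightarrow> degree E x \<ge> 2"
  shows "\<exists>E'. good V E' D \<and> card E' = card E \<and> sigma V E' = sigma V E \<and> card (U V E') < card (U V E)"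
proof -
  have G: "simple_graph V E" using g unfolding good_def by auto
  have finV: "finite V" using G unfolding simple_graph_def by auto
  obtain p q where pq: "{p, q} \<in> E" "reach E a p" "reach (E - {{p, q}}) q p"
    using cycle_exists[OF G aV deg2] by blast
  have "degree E c \<ge> 1" using g cV unfolding good_def by auto
  then obtain d where cd: "{c, d} \<in> E" using degree_pos_nbr[OF G] by blast
  have npc: "\<not> reach E p c" using nac pq(2) reach_trans by blast
  define E' where "E' = insert {p, c} (insert {q, d} (E - {{p, q}} - {{c, d}}))"
  have sw: "simple_graph V E' \<and> card E' = card E \<and> (\<forall>v. degree E' v = degree E v) \<and> U V E' \<subset> U V E"
    using switch[OF G pq(1) cd pq(3) npc] unfolding E'_def by blast
  have "good V E' D" using sw g unfolding good_def by auto
  moreover have "sigma V E' = sigma V E" unfolding sigma_def using sw by simp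
  moreover have "card (U V E') < card (U V E)" using sw finite_U[OF finV] psubset_card_mono by blast
  ultimately show ?thesis using sw by blast
qed

lemma step:
  assumes g: "good V E D" and D2: "D \<ge> 2" and nc: "\<not> connected_graph V E"
  shows "\<exists>V' E'. good V' E' D \<and> card E' = card E \<and> sigma V E \<le> sigma V' E' \<and> card (U V' E') < card (U V E)"
proof -
  have G: "simple_graph V E" using g unfolding good_def by auto
  have finV: "finite V" using G unfolding simple_graph_def by auto
  have finE: "finite E" using simple_finite_E[OF G] .
  have "V \<noteq> {}" using g unfolding good_def by auto
  then obtain a c where ac: "a \<in> V" "c \<in> V" "\<not> reach E a c" using nc unfolding connected_graph_def by blast
  show ?thesis
  proof (cases "\<exists>x y. reach E a x \<and> reach E c y \<and> degree E x + degree E y \<le> D")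
    case True
    then obtain x y where xy: "reach E a x" "reach E c y" "degree E x + degree E y \<le> D" by blast
    have xV: "x \<in> V" using reach_in_V[OF G ac(1) xy(1)] .
    have yV: "y \<in> V" using reach_in_V[OF G ac(2) xy(2)] .
    have nxy: "\<not> reach E x y"
    proof
      assume "reach E x y"
      then have "reach E a y" using xy(1) reach_trans by blast
      then have "reach E a c" using reach_sym[OF xy(2)] reach_trans by blast
      then show False using ac by blast
    qed
    have dy: "degree E y \<ge> 1" "degree E x \<ge> 1" using g xV yV unfolding good_def by auto
    then obtain w where yw: "{y, w} \<in> E" using degree_pos_nbr[OF G] by blast
    define \<phi> where "\<phi> = (\<lambda>z. if z = y then x else z)"
    define E' where "E' = (\<lambda>e. \<phi> ` e) ` E"
    have id: "simple_graph (V - {y}) E' \<and> card E' = card E \<and> degree E' x = degree E x + degree E y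
     \<and> (\<forall>z. z \<noteq> x \<longrightarrow> z \<noteq> y \<longrightarrow> degree E' z = degree E z) \<and> U (V - {y}) E' \<subset> U V E"
      using identify[OF G xV yV nxy yw] unfolding E'_def \<phi>_def by blast
    have xy_ne: "x \<noteq> y" using nxy by auto
    have good': "good (V - {y}) E' D"
    proof -
      obtain z0 where z0: "z0 \<in> V" "degree E z0 = D" using g unfolding good_def by auto
      have "z0 \<noteq> x" "z0 \<noteq> y" using z0 xy(3) dy by auto
      then have "z0 \<in> V - {y} \<and> degree E' z0 = D" using id z0 by auto
      moreover have "\<forall>z\<in>V - {y}. 1 \<le> degree E' z \<and> degree E' z \<le> D"
      proof
        fix z assume z: "z \<in> V - {y}"
        show "1 \<le> degree E' z \<and> degree E' z \<le> D"
        proof (cases "z = x")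
          case True then show ?thesis using id xy(3) dy by auto
        next
          case False then show ?thesis using id z g unfolding good_def by auto
        qed
      qed
      ultimately show ?thesis using id unfolding good_def by blast
    qed
    have sig: "sigma V E \<le> sigma (V - {y}) E'"
    proof -
      let ?f = "\<lambda>z. degree E z choose 2"
      let ?f' = "\<lambda>z. degree E' z choose 2"
      have s1: "sigma V E = ?f y + (?f x + (\<Sum>z\<in>V - {y} - {x}. ?f z))"
      proof -
        have "sigma V E = ?f y + (\<Sum>z\<in>V - {y}. ?f z)" unfolding sigma_def using sum.remove[OF finV yV] .
        moreover have "(\<Sum>z\<in>V - {y}. ?f z) = ?f x + (\<Sum>z\<in>V - {y} - {x}. ?f z)"
          using sum.remove[of "V - {y}" x] finV xV xy_ne by simp
        ultimately show ?thesis by simp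
      qed
      have s2: "sigma (V - {y}) E' = ?f' x + (\<Sum>z\<in>V - {y} - {x}. ?f' z)"
        unfolding sigma_def using sum.remove[of "V - {y}" x] finV xV xy_ne by simp
      have s3: "(\<Sum>z\<in>V - {y} - {x}. ?f' z) = (\<Sum>z\<in>V - {y} - {x}. ?f z)"
        using id by (intro sum.cong) auto
      have "?f y + ?f x \<le> ?f' x" using id choose2_super[of "degree E x" "degree E y"] by simp
      then show ?thesis using s1 s2 s3 by linarith
    qed
    have "card (U (V - {y}) E') < card (U V E)" using id finite_U[OF finV] psubset_card_mono by blast
    then show ?thesis using good' sig id by blast
  next
    case False
    have "(\<forall>x. reach E a x \<longrightarrow> degree E x \<ge> 2) \<or> (\<forall>y. reach E c y \<longrightarrow> degree E y \<ge> 2)"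
    proof (rule ccontr)
      assume "\<not> ?thesis"
      then obtain x y where "reach E a x" "degree E x < 2" "reach E c y" "degree E y < 2" by auto
      then have "reach E a x \<and> reach E c y \<and> degree E x + degree E y \<le> D" using D2 by linarith
      then show False using False by blast
    qed
    then show ?thesis
    proof
      assume "\<forall>x. reach E a x \<longrightarrow> degree E x \<ge> 2"
      then obtain E' where "good V E' D" "card E' = card E" "sigma V E' = sigma V E" "card (U V E') < card (U V E)"
        using switch_step[OF g ac(1) ac(2) ac(3)] by blast
      then have "good V E' D \<and> card E' = card E \<and> sigma V E \<le> sigma V E' \<and> card (U V E') < card (U V E)" by simp
      then show ?thesis by blast
    next
      assume "\<forall>x. reach E c x \<longrightarrow> degree E x \<ge> 2"
      moreover have "\<not> reach E c a" using ac(3) reach_sym by blast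
      ultimately obtain E' where "good V E' D" "card E' = card E" "sigma V E' = sigma V E" "card (U V E') < card (U V E)"
        using switch_step[OF g ac(2) ac(1)] by blast
      then have "good V E' D \<and> card E' = card E \<and> sigma V E \<le> sigma V E' \<and> card (U V E') < card (U V E)" by simp
      then show ?thesis by blast
    qed
  qed
qed

lemma make_connected:
  assumes "good V E D" "D \<ge> 2"
  shows "\<exists>V' E'. good V' E' D \<and> connected_graph V' E' \<and> card E' = card E \<and> sigma V E \<le> sigma V' E'"
  using assms
proof (induction "card (U V E)" arbitrary: V E rule: less_induct)
  case less
  show ?case
  proof (cases "connected_graph V E")
    case True then show ?thesis using less.prems by blast
  next
    case False
    then obtain V' E' where st: "good V' E' D" "card E' = card E" "sigma V E \<le> sigma V' E'"
        "card (U V' E') < card (U V E)"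
      using step[OF less.prems] by blast
    obtain V'' E'' where "good V'' E'' D" "connected_graph V'' E''" "card E'' = card E'"
        "sigma V' E' \<le> sigma V'' E''"
      using less.hyps[OF st(4) st(1) less.prems(2)] by blast
    then show ?thesis using st by (metis le_trans)
  qed
qed



lemma conn_bound:
  assumes G: "simple_graph V E" and C: "connected_graph V E"
  shows "card V \<le> card E + 1"
proof -
  let ?A = "\<lambda>x y. {x, y} \<in> E"
  have finV: "finite V" using G unfolding simple_graph_def by auto
  have finE: "finite E" using simple_finite_E[OF G] .
  obtain r where r: "r \<in> V" using C unfolding connected_graph_def by blast
  define dist where "dist v = (LEAST n. (?A ^^ n) r v)" for v
  have ex: "\<exists>n. (?A ^^ n) r v" if "v \<in> V" for v
    using C r that unfolding connected_graph_def rtranclp_power by blast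
  have distI: "(?A ^^ dist v) r v" if "v \<in> V" for v
    unfolding dist_def using LeastI_ex[OF ex[OF that]] .
  have distpos: "dist v \<noteq> 0" if "v \<in> V" "v \<noteq> r" for v
  proof
    assume "dist v = 0"
    then have "(?A ^^ 0) r v" using distI[OF that(1)] by simp
    then show False using that(2) by simp
  qed
  define par where "par v = (SOME w. (?A ^^ (dist v - 1)) r w \<and> ?A w v)" for v
  have parI: "(?A ^^ (dist v - 1)) r (par v) \<and> ?A (par v) v" if "v \<in> V" "v \<noteq> r" for v
  proof -
    have sd: "Suc (dist v - 1) = dist v" using distpos[OF that] by simp
    have "(?A ^^ Suc (dist v - 1)) r v" unfolding sd by (rule distI[OF that(1)])
    then have "\<exists>w. (?A ^^ (dist v - 1)) r w \<and> ?A w v" by (rule relpowp_Suc_E) blast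
    then show ?thesis unfolding par_def by (rule someI_ex)
  qed
  define g where "g v = {par v, v}" for v
  have gE: "g ` (V - {r}) \<subseteq> E" using parI unfolding g_def by auto
  have inj: "inj_on g (V - {r})"
  proof (rule inj_onI)
    fix v1 v2 assume v1: "v1 \<in> V - {r}" and v2: "v2 \<in> V - {r}" and eq: "g v1 = g v2"
    show "v1 = v2"
    proof (rule ccontr)
      assume ne: "v1 \<noteq> v2"
      have "par v1 = v2 \<and> par v2 = v1" using eq ne unfolding g_def by (auto simp: doubleton_eq_iff)
      then have p1: "par v1 = v2" "par v2 = v1" by auto
      have "(?A ^^ (dist v1 - 1)) r (par v1)" "(?A ^^ (dist v2 - 1)) r (par v2)" using parI v1 v2 by auto
      then have a: "(?A ^^ (dist v1 - 1)) r v2" "(?A ^^ (dist v2 - 1)) r v1" unfolding p1 .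
      have "dist v2 \<le> dist v1 - 1" unfolding dist_def[of v2]
        using Least_le[of "\<lambda>n. (?A ^^ n) r v2" "dist v1 - 1"] a(1) by blast
      moreover have "dist v1 \<le> dist v2 - 1" unfolding dist_def[of v1]
        using Least_le[of "\<lambda>n. (?A ^^ n) r v1" "dist v2 - 1"] a(2) by blast
      moreover have "dist v1 \<noteq> 0" "dist v2 \<noteq> 0" using distpos v1 v2 by auto
      ultimately show False by linarith
    qed
  qed
  have "card (V - {r}) \<le> card E" using card_inj_on_le[OF inj gE finE] .
  then show ?thesis using r finV by (simp add: card_Diff_singleton)
qed

lemma good_iff:
  assumes G: "simple_graph V E" and E1: "card E \<ge> 1"
  shows "good V E D \<longleftrightarrow> (max_degree V E = D \<and> min_degree V E \<ge> 1)"
proof -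
  have finV: "finite V" using G unfolding simple_graph_def by auto
  have "E \<noteq> {}" using E1 by auto
  then obtain e where "e \<in> E" by blast
  then have "card e = 2" "e \<subseteq> V" using G unfolding simple_graph_def by auto
  then have Vne: "V \<noteq> {}" by auto
  have fin: "finite (degree E ` V)" using finV by simp
  have ne: "degree E ` V \<noteq> {}" using Vne by simp
  show ?thesis
  proof
    assume g: "good V E D"
    have b1: "\<forall>y\<in>degree E ` V. y \<le> D \<and> 1 \<le> y" using g unfolding good_def by blast
    have b2: "D \<in> degree E ` V" using g unfolding good_def by (metis image_eqI)
    have "Max (degree E ` V) = D" using Max_eqI[OF fin] b1 b2 by blast
    moreover have "min_degree V E \<ge> 1" unfolding min_degree_def using b1 Min_ge_iff[OF fin ne] by blast
    ultimately show "max_degree V E = D \<and> min_degree V E \<ge> 1" unfolding max_degree_def by simp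
  next
    assume h: "max_degree V E = D \<and> min_degree V E \<ge> 1"
    have "\<forall>x\<in>V. 1 \<le> degree E x \<and> degree E x \<le> D"
    proof
      fix x assume x: "x \<in> V"
      have "degree E x \<le> Max (degree E ` V)" using Max_ge[OF fin] x by simp
      moreover have "Min (degree E ` V) \<le> degree E x" using Min_le[OF fin] x by simp
      ultimately show "1 \<le> degree E x \<and> degree E x \<le> D"
        using h unfolding max_degree_def min_degree_def by linarith
    qed
    moreover have "\<exists>x\<in>V. degree E x = D"
      using Max_in[OF fin ne] h unfolding max_degree_def by auto
    ultimately show "good V E D" using G unfolding good_def by blast
  qed
qed

lemma witness:
  assumes ND: "N \<ge> D" and D2: "D \<ge> 2"
  shows "\<exists>V E. good V E D \<and> card E = N"
proof -
  define g where "g k = (if k \<le> D then 0 else k - 1)" for k :: nat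
  define V where "V = {0..N}"
  define E where "E = (\<lambda>k. {g k, k}) ` {1..N}"
  have glt: "g k < k" if "k \<ge> 1" for k using that unfolding g_def by auto
  have sg: "simple_graph V E"
    unfolding simple_graph_def
  proof
    show "finite V" unfolding V_def by simp
    show "\<forall>e\<in>E. e \<subseteq> V \<and> card e = 2"
    proof
      fix e assume "e \<in> E"
      then obtain k where k: "k \<in> {1..N}" "e = {g k, k}" unfolding E_def by blast
      have "g k < k" using glt k(1) by simp
      then show "e \<subseteq> V \<and> card e = 2" using k unfolding V_def by auto
    qed
  qed
  have inj: "inj_on (\<lambda>k. {g k, k}) {1..N}"
  proof (rule inj_onI)
    fix k l assume k: "k \<in> {1..N}" and l: "l \<in> {1..N}" and eq: "{g k, k} = {g l, l}"
    show "k = l"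
    proof (rule ccontr)
      assume "k \<noteq> l"
      then have "k = g l \<and> g k = l" using eq by (auto simp: doubleton_eq_iff)
      moreover have "g l < l" "g k < k" using glt k l by auto
      ultimately show False by linarith
    qed
  qed
  have cardE: "card E = N" unfolding E_def using card_image[OF inj] by simp
  have deg: "degree E x = card {k \<in> {1..N}. x = g k \<or> x = k}" for x
  proof -
    have "{e \<in> E. x \<in> e} = (\<lambda>k. {g k, k}) ` {k \<in> {1..N}. x = g k \<or> x = k}" unfolding E_def by auto
    moreover have "inj_on (\<lambda>k. {g k, k}) {k \<in> {1..N}. x = g k \<or> x = k}" using inj by (rule inj_on_subset) auto
    ultimately show ?thesis unfolding degree_def by (simp add: card_image)
  qed
  have g0: "g k = 0 \<longleftrightarrow> k \<le> D" if "k \<ge> 1" for k using that D2 unfolding g_def by auto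
  have deg0: "degree E 0 = D"
  proof -
    have "k \<in> {k \<in> {1..N}. 0 = g k \<or> 0 = k} \<longleftrightarrow> k \<in> {1..D}" for k
    proof (cases "k \<ge> 1")
      case True then show ?thesis using g0[OF True] ND by auto
    next
      case False then show ?thesis by auto
    qed
    then have "{k \<in> {1..N}. 0 = g k \<or> 0 = k} = {1..D}" by blast
    then show ?thesis using deg by simp
  qed
  have degx: "1 \<le> degree E x \<and> degree E x \<le> 2" if "x \<in> {1..N}" for x
  proof -
    have sub: "{k \<in> {1..N}. x = g k \<or> x = k} \<subseteq> {x, Suc x}"
    proof
      fix k assume "k \<in> {k \<in> {1..N}. x = g k \<or> x = k}"
      then have k: "k \<ge> 1" "x = g k \<or> x = k" by auto
      show "k \<in> {x, Suc x}"
      proof (cases "x = k")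
        case True then show ?thesis by simp
      next
        case False
        then have xg: "x = g k" using k by blast
        show ?thesis
        proof (cases "k \<le> D")
          case True then have "x = 0" using xg unfolding g_def by simp
          then show ?thesis using that by simp
        next
          case False then have "x = k - 1" using xg unfolding g_def by simp
          then show ?thesis using k by simp
        qed
      qed
    qed
    have "card {k \<in> {1..N}. x = g k \<or> x = k} \<le> card {x, Suc x}" using card_mono[OF _ sub] by simp
    moreover have "x \<in> {k \<in> {1..N}. x = g k \<or> x = k}" using that by simp
    then have "card {k \<in> {1..N}. x = g k \<or> x = k} \<ge> 1"
      using card_mono[of "{k \<in> {1..N}. x = g k \<or> x = k}" "{x}"] by simp
    ultimately show ?thesis using deg by simp
  qed
  have "good V E D"
    unfolding good_def
  proof (intro conjI)
    show "simple_graph V E" by (rule sg)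
    show "\<forall>x\<in>V. 1 \<le> degree E x \<and> degree E x \<le> D"
    proof
      fix x assume "x \<in> V"
      then have "x = 0 \<or> x \<in> {1..N}" unfolding V_def by auto
      then show "1 \<le> degree E x \<and> degree E x \<le> D"
      proof
        assume "x = 0" then show ?thesis using deg0 D2 by simp
      next
        assume "x \<in> {1..N}"
        then have "1 \<le> degree E x \<and> degree E x \<le> 2" by (rule degx)
        then show ?thesis using D2 by linarith
      qed
    qed
    show "\<exists>x\<in>V. degree E x = D" using deg0 unfolding V_def by auto
  qed
  then show ?thesis using cardE by blast
qed

theorem mainTheorem10:
  fixes N D :: nat
  assumes "N \<ge> D" and "D \<ge> 2"
  shows "\<exists>V E. simple_graph V E \<and> connected_graph V E \<and> num_edges V E = N \<and>
           max_degree V E = D \<and> card (snd (line_graph V E)) = f_max N D \<and>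
           num_vertices V E \<le> N + 1"
proof -
  define S where "S = {card (snd (line_graph V E)) | V E.
      simple_graph V E \<and> num_edges V E = N \<and> max_degree V E = D \<and> min_degree V E \<ge> 1}"
  have N1: "N \<ge> 1" using assms by linarith
  have fS: "f_max N D = Max S" unfolding f_max_def S_def by simp
  have finS: "finite S"
  proof (rule finite_subset[of _ "{..2 ^ N}"])
    show "S \<subseteq> {..2 ^ N}"
    proof
      fix s assume "s \<in> S"
      then obtain V E where VE: "s = card (line_graph_edges E)" "simple_graph V E" "card E = N"
        unfolding S_def line_graph_def num_edges_def by auto
      have finE: "finite E" using simple_finite_E[OF VE(2)] .
      have "line_graph_edges E \<subseteq> Pow E" unfolding line_graph_edges_def by auto
      then have "card (line_graph_edges E) \<le> card (Pow E)" using finE by (simp add: card_mono)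
      then show "s \<in> {..2 ^ N}" using VE finE by (simp add: card_Pow)
    qed
  qed simp
  obtain V0 E0 where w0: "good V0 E0 D" "card E0 = N" using witness[OF assms] by blast
  have G0: "simple_graph V0 E0" using w0 unfolding good_def by auto
  have "max_degree V0 E0 = D \<and> min_degree V0 E0 \<ge> 1" using w0 good_iff[OF G0] N1 by simp
  then have P0: "simple_graph V0 E0 \<and> num_edges V0 E0 = N \<and> max_degree V0 E0 = D \<and> min_degree V0 E0 \<ge> 1"
    using G0 w0 unfolding num_edges_def by simp
  have "card (snd (line_graph V0 E0)) \<in> S" unfolding S_def using P0 by blast
  then have Sne: "S \<noteq> {}" by blast
  have "Max S \<in> S" using Max_in[OF finS Sne] .
  then obtain V1 E1 where m: "Max S = card (line_graph_edges E1)" "simple_graph V1 E1" "card E1 = N"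
      "max_degree V1 E1 = D" "min_degree V1 E1 \<ge> 1"
    unfolding S_def line_graph_def num_edges_def by auto
  have g1: "good V1 E1 D" using good_iff[OF m(2)] m N1 by simp
  obtain V2 E2 where c: "good V2 E2 D" "connected_graph V2 E2" "card E2 = card E1" "sigma V1 E1 \<le> sigma V2 E2"
    using make_connected[OF g1 assms(2)] by blast
  have G2: "simple_graph V2 E2" using c unfolding good_def by auto
  have md2: "max_degree V2 E2 = D \<and> min_degree V2 E2 \<ge> 1" using good_iff[OF G2] c m N1 by simp
  have P2: "simple_graph V2 E2 \<and> num_edges V2 E2 = N \<and> max_degree V2 E2 = D \<and> min_degree V2 E2 \<ge> 1"
    using G2 md2 c m unfolding num_edges_def by simp
  have "card (snd (line_graph V2 E2)) \<in> S" unfolding S_def using P2 by blast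
  then have in2: "card (line_graph_edges E2) \<in> S" unfolding line_graph_def by simp
  have le: "card (line_graph_edges E2) \<le> Max S" using Max_ge[OF finS in2] .
  have ge: "Max S \<le> card (line_graph_edges E2)"
    using m(1) c(4) line_graph_formula[OF m(2)] line_graph_formula[OF G2] unfolding sigma_def by simp
  have "card V2 \<le> N + 1" using conn_bound[OF G2 c(2)] c m by simp
  then show ?thesis using G2 c md2 le ge fS m
    unfolding line_graph_def num_edges_def num_vertices_def by auto
qed

end
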